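(* Let $n\ge1$. The eigenvalues of $D^n$ are $1/2$ with multiplicity $2$ and $0$ with multiplicity $2^n-2$. The unit eigenvectors corresponding to the eigenvalue $1/2$ are $\psi_0^n$ and $\psi_1^n$, where $\psi_0^n\in\mathbb{C}^{2^n}$ has $j$-th coordinate ($j=0,\dots,2^n-1$) equal to $2^{-(n-1)/2}i^{c_n(j)}$ for $j$ even and $0$ for $j$ odd, and $\psi_1^n$ has $j$-th coordinate $0$ for $j$ even and $2^{-(n-1)/2}i^{c_n(j)}$ for $j$ odd.
   Context: For $n\ge1$, an $n$-path is a string $\alpha_0\alpha_1\cdots\alpha_n$ with $\alpha_k\in\{0,1\}$, $\alpha_0=0$; the $n$-paths are identified with $j\in\{0,\dots,2^n-1\}$, the path $\omega_j$ being the one whose string is the binary representation of $j$ (with $\alpha_n$ least significant). $D^n$ is the $2^n\times2^n$ matrix with $D^n_{jk}=D^n(\omega_j,\omega_k)$, where $D^n(\omega,\omega')=2^{-n}\prod_{k=1}^n i^{|\alpha_k-\alpha_{k-1}|}\prod_{k=1}^n i^{-|\alpha'_k-\alpha'_{k-1}|}\,\delta_{\alpha_n\alpha'_n}$ for $\omega=\alpha_0\cdots\alpha_n$, $\omega'=\alpha'_0\cdots\alpha'_n$ ($i=\sqrt{-1}$). $c_n(j)$ is the number of $k\in\{1,\dots,n\}$ with $\alpha_k\ne\alpha_{k-1}$ for the path $\omega_j$. *)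

theory Defs
  imports "Jordan_Normal_Form.Char_Poly"
begin

text \<open>The n-path omega_j: alpha_k is bit (n-k) of j (alpha_n least significant),
  for k = 0..n; for j < 2^n, alpha_0 = 0 automatically.\<close>
definition path_alpha :: "nat \<Rightarrow> nat \<Rightarrow> nat \<Rightarrow> int" where
  "path_alpha n j k = (if bit j (n - k) then 1 else 0)"

definition c_count :: "nat \<Rightarrow> nat \<Rightarrow> nat" where
  "c_count n j = card {k \<in> {1..n}. path_alpha n j k \<noteq> path_alpha n j (k - 1)}"

definition D_entry :: "nat \<Rightarrow> nat \<Rightarrow> nat \<Rightarrow> complex" where
  "D_entry n j l =
     complex_of_real (2 powr (- real n))
     * (\<Prod>k=1..n. \<i> powi \<bar>path_alpha n j k - path_alpha n j (k - 1)\<bar>)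
     * (\<Prod>k=1..n. \<i> powi (- \<bar>path_alpha n l k - path_alpha n l (k - 1)\<bar>))
     * (if path_alpha n j n = path_alpha n l n then 1 else 0)"

definition D_mat :: "nat \<Rightarrow> complex mat" where
  "D_mat n = mat (2 ^ n) (2 ^ n) (\<lambda>(j, l). D_entry n j l)"

definition psi0 :: "nat \<Rightarrow> complex vec" where
  "psi0 n = vec (2 ^ n) (\<lambda>j. if even j
      then complex_of_real (2 powr (- (real n - 1) / 2)) * \<i> ^ c_count n j else 0)"

definition psi1 :: "nat \<Rightarrow> complex vec" where
  "psi1 n = vec (2 ^ n) (\<lambda>j. if even j then 0
      else complex_of_real (2 powr (- (real n - 1) / 2)) * \<i> ^ c_count n j)"

definition vnorm2 :: "complex vec \<Rightarrow> real" where
  "vnorm2 v = (\<Sum>j<dim_vec v. (cmod (v $ j))\<^sup>2)"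

definition vinner :: "complex vec \<Rightarrow> complex vec \<Rightarrow> complex" where
  "vinner v w = (\<Sum>j<dim_vec v. v $ j * cnj (w $ j))"

end

theory Submission
  imports Defs "Jordan_Normal_Form.Schur_Decomposition"
begin


definition uu :: "nat \<Rightarrow> nat \<Rightarrow> complex" where "uu n j = \<i> ^ c_count n j"

lemma prod_if_const: "finite K \<Longrightarrow> (\<Prod>k\<in>K. if P k then (a::complex) else 1) = a ^ card {k\<in>K. P k}"
proof -
  assume f: "finite K"
  have "(\<Prod>k\<in>K. if P k then a else 1) = (\<Prod>k\<in>{k\<in>K. P k}. a)"
    using f by (simp add: prod.If_cases Int_def conj_commute)
  thus ?thesis by simp
qed

lemma pa01: "path_alpha n j k \<in> {0,1}" by (simp add: path_alpha_def)

lemma powi_abs: "\<i> powi \<bar>path_alpha n j k - path_alpha n j k'\<bar> = (if path_alpha n j k \<noteq> path_alpha n j k' then \<i> else 1)"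
  by (simp add: path_alpha_def)

lemma powi_nabs: "\<i> powi (- \<bar>path_alpha n j k - path_alpha n j k'\<bar>) = (if path_alpha n j k \<noteq> path_alpha n j k' then cnj \<i> else 1)"
  by (simp add: path_alpha_def power_int_minus)

lemma D_entry_eq: "D_entry n j l = complex_of_real (2 powr (- real n)) * uu n j * cnj (uu n l) * (if even j = even l then 1 else 0)"
proof -
  have 1: "(\<Prod>k=1..n. \<i> powi \<bar>path_alpha n j k - path_alpha n j (k - 1)\<bar>) = uu n j"
    unfolding powi_abs uu_def c_count_def by (subst prod_if_const) auto
  have 2: "(\<Prod>k=1..n. \<i> powi (-\<bar>path_alpha n l k - path_alpha n l (k - 1)\<bar>)) = cnj (uu n l)"
    unfolding powi_nabs uu_def c_count_def by (subst prod_if_const) auto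
  have 3: "path_alpha n j n = path_alpha n l n \<longleftrightarrow> (even j = even l)"
    by (simp add: path_alpha_def bit_0)
  show ?thesis unfolding D_entry_def 1 2 3 by simp
qed

lemma uu_norm: "cmod (uu n j) = 1" by (simp add: uu_def norm_power)
lemma uu_cnj: "uu n j * cnj (uu n j) = 1"
  using uu_norm[of n j] by (metis complex_norm_square mult.commute of_real_1 one_power2 power2_eq_square)
lemma uu_cnj2: "cnj (uu n j) * uu n j = 1" using uu_cnj[of n j] by (simp add: mult.commute)


lemma card_even: "card {l. l < 2*m \<and> even l = p} = m"
proof (cases p)
  case True
  have "{l. l < 2*m \<and> even l = p} = (\<lambda>x. 2*x) ` {..<m}"
    using True by (auto elim!: evenE)
  thus ?thesis by (simp add: card_image inj_on_def)
next
  case False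
  have "{l. l < 2*m \<and> even l = p} = (\<lambda>x. 2*x+1) ` {..<m}"
    using False by (auto elim!: oddE)
  thus ?thesis by (simp add: card_image inj_on_def)
qed

definition TT :: "nat \<Rightarrow> bool \<Rightarrow> complex vec \<Rightarrow> complex" where
  "TT n p v = (\<Sum>l<2^n. if even l = p then cnj (uu n l) * v $ l else 0)"

lemma D_carrier: "D_mat n \<in> carrier_mat (2^n) (2^n)" by (simp add: D_mat_def)

lemma D_mulvec: assumes "v \<in> carrier_vec (2^n)" "j < 2^n"
  shows "(D_mat n *\<^sub>v v) $ j = complex_of_real (2 powr (- real n)) * uu n j * TT n (even j) v"
proof -
  have "(D_mat n *\<^sub>v v) $ j = row (D_mat n) j \<bullet> v" using assms by (simp add: D_mat_def)
  also have "\<dots> = (\<Sum>l\<in>{0..<2^n}. row (D_mat n) j $ l * v $ l)" using assms by (simp add: scalar_prod_def)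
  also have "\<dots> = (\<Sum>l<2^n. D_entry n j l * v $ l)"
    by (simp only: atLeast0LessThan, rule sum.cong) (auto simp: D_mat_def assms)
  also have "\<dots> = (\<Sum>l<2^n. complex_of_real (2 powr (- real n)) * uu n j * (if even l = even j then cnj (uu n l) * v $ l else 0))"
    by (rule sum.cong, auto simp: D_entry_eq)
  also have "\<dots> = complex_of_real (2 powr (- real n)) * uu n j * TT n (even j) v"
    by (simp add: TT_def sum_distrib_left)
  finally show ?thesis .
qed

lemma r_half: assumes "n \<ge> 1" shows "complex_of_real (2 powr (- real n)) * 2^(n-1) = 1/2"
proof -
  obtain m where m: "n = Suc m" using assms by (cases n) auto
  have "(2::real) powr (- real n) = 1 / 2^n" by (simp add: powr_minus powr_realpow divide_inverse)
  hence "complex_of_real (2 powr (- real n)) = 1 / 2^n" by simp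
  thus ?thesis using m by simp
qed

lemma TT_D: assumes "n \<ge> 1" "v \<in> carrier_vec (2^n)"
  shows "TT n p (D_mat n *\<^sub>v v) = TT n p v / 2"
proof -
  have "TT n p (D_mat n *\<^sub>v v) = (\<Sum>l<(2::nat)^n. if even l = p then complex_of_real (2 powr (- real n)) * TT n p v else 0)"
    unfolding TT_def[of n p "D_mat n *\<^sub>v v"]
  proof (rule sum.cong)
    fix l assume l: "l \<in> {..<(2::nat)^n}"
    have k: "cnj (uu n l) * (complex_of_real (2 powr (- real n)) * uu n l * TT n p v) =
          (uu n l * cnj (uu n l)) * (complex_of_real (2 powr (- real n)) * TT n p v)" by (simp only: ac_simps)
    show "(if even l = p then cnj (uu n l) * (D_mat n *\<^sub>v v) $ l else 0) =
          (if even l = p then complex_of_real (2 powr (- real n)) * TT n p v else 0)"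
      using l by (simp only: D_mulvec[OF assms(2)] k uu_cnj mult_1 lessThan_iff) (simp add: uu_cnj2)
  qed simp
  also have "\<dots> = (\<Sum>l\<in>{l::nat. l<2^n \<and> even l = p}. complex_of_real (2 powr (- real n)) * TT n p v)"
    by (simp add: sum.If_cases Int_def lessThan_def conj_commute)
  also have "\<dots> = of_nat (card {l::nat. l<2*2^(n-1) \<and> even l = p}) * complex_of_real (2 powr (- real n)) * TT n p v"
  proof -
    have "(2::nat)^n = 2*2^(n-1)" using assms(1) by (cases n) auto
    thus ?thesis by simp
  qed
  also have "\<dots> = TT n p v / 2" unfolding card_even using r_half[OF assms(1)] by (simp add: mult.commute)
  finally show ?thesis .
qed



lemma sum_par: assumes "n \<ge> 1"
  shows "(\<Sum>l<(2::nat)^n. if even l = p then c else 0) = of_nat (2^(n-1)) * (c::'a::comm_semiring_1)"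
proof -
  have "(\<Sum>l<(2::nat)^n. if even l = p then c else 0) = (\<Sum>l\<in>{l::nat. l<2^n \<and> even l = p}. c)"
    by (simp add: sum.If_cases Int_def lessThan_def conj_commute)
  also have "\<dots> = of_nat (card {l::nat. l<2*2^(n-1) \<and> even l = p}) * c"
  proof -
    have "(2::nat)^n = 2*2^(n-1)" using assms by (cases n) auto
    thus ?thesis by simp
  qed
  finally show ?thesis unfolding card_even .
qed

definition ss :: "nat \<Rightarrow> real" where "ss n = 2 powr (- (real n - 1) / 2)"

lemma ss_sq: assumes "n \<ge> 1" shows "ss n * ss n * 2^(n-1) = 1"
proof -
  have "ss n * ss n = 2 powr (- (real n - 1))" unfolding ss_def by (simp add: powr_add[symmetric])
  moreover have "(2::real)^(n-1) = 2 powr (real n - 1)" using assms by (simp add: powr_realpow[symmetric] of_nat_diff)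
  ultimately show ?thesis by (simp add: powr_add[symmetric])
qed

lemma ss_pos: "ss n > 0" by (simp add: ss_def)

lemma psi0_nth: "j < 2^n \<Longrightarrow> psi0 n $ j = (if even j then complex_of_real (ss n) * uu n j else 0)"
  by (simp add: psi0_def ss_def uu_def)
lemma psi1_nth: "j < 2^n \<Longrightarrow> psi1 n $ j = (if even j then 0 else complex_of_real (ss n) * uu n j)"
  by (simp add: psi1_def ss_def uu_def)
lemma psi0_carrier: "psi0 n \<in> carrier_vec (2^n)" by (simp add: psi0_def)
lemma psi1_carrier: "psi1 n \<in> carrier_vec (2^n)" by (simp add: psi1_def)

lemma TT_psi0: assumes "n \<ge> 1" shows "TT n p (psi0 n) = (if p then of_nat (2^(n-1)) * complex_of_real (ss n) else 0)"
proof -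
  have "TT n p (psi0 n) = (\<Sum>l<(2::nat)^n. if even l = p then (if p then complex_of_real (ss n) else 0) else 0)"
    unfolding TT_def by (rule sum.cong, auto simp: psi0_nth mult.left_commute[of "cnj _"] uu_cnj mult.commute[of "cnj _"])
  thus ?thesis using sum_par[OF assms, of True "complex_of_real (ss n)"] by (cases p) simp_all
qed

lemma TT_psi1: assumes "n \<ge> 1" shows "TT n p (psi1 n) = (if p then 0 else of_nat (2^(n-1)) * complex_of_real (ss n))"
proof -
  have "TT n p (psi1 n) = (\<Sum>l<(2::nat)^n. if even l = p then (if p then 0 else complex_of_real (ss n)) else 0)"
    unfolding TT_def by (rule sum.cong, auto simp: psi1_nth mult.left_commute[of "cnj _"] uu_cnj mult.commute[of "cnj _"])
  thus ?thesis using sum_par[OF assms, of False "complex_of_real (ss n)"] by (cases p) simp_all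
qed

lemma psi0_ne: "psi0 n \<noteq> 0\<^sub>v (2^n)"
proof
  assume "psi0 n = 0\<^sub>v (2^n)"
  hence "psi0 n $ 0 = 0" by simp
  moreover have "psi0 n $ 0 = complex_of_real (ss n) * uu n 0" by (simp add: psi0_nth)
  moreover have "uu n 0 \<noteq> 0" by (simp add: uu_def)
  ultimately show False using ss_pos[of n] by simp
qed

lemma psi1_ne: assumes "n \<ge> 1" shows "psi1 n \<noteq> 0\<^sub>v (2^n)"
proof
  have o: "1 < (2::nat)^n" using assms by (intro one_less_power) auto
  assume "psi1 n = 0\<^sub>v (2^n)"
  hence "psi1 n $ 1 = 0" using o by simp
  moreover have "psi1 n $ 1 = complex_of_real (ss n) * uu n 1" using o by (simp add: psi1_nth)
  moreover have "uu n 1 \<noteq> 0" by (simp add: uu_def)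
  ultimately show False using ss_pos[of n] by simp
qed

lemma eig0: assumes "n \<ge> 1" shows "eigenvector (D_mat n) (psi0 n) (1/2)"
  unfolding eigenvector_def
proof (intro conjI)
  show "psi0 n \<in> carrier_vec (dim_row (D_mat n))" by (simp add: D_mat_def psi0_carrier)
  show "psi0 n \<noteq> 0\<^sub>v (dim_row (D_mat n))" using psi0_ne by (simp add: D_mat_def)
  show "D_mat n *\<^sub>v psi0 n = (1/2) \<cdot>\<^sub>v psi0 n"
  proof (rule eq_vecI)
    fix j assume j: "j < dim_vec ((1/2) \<cdot>\<^sub>v psi0 n)"
    hence j': "j < 2^n" by (simp add: psi0_def)
    show "(D_mat n *\<^sub>v psi0 n) $ j = ((1/2) \<cdot>\<^sub>v psi0 n) $ j"
    proof -
      have e: "((1/2) \<cdot>\<^sub>v psi0 n) $ j = 1/2 * psi0 n $ j" using j' psi0_carrier[of n] by simp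
      have r: "complex_of_real (2 powr (- real n)) * 2^(n-1) = 1/2" by (rule r_half[OF assms])
      have "complex_of_real (2 powr (- real n)) * uu n j * (2^(n-1) * complex_of_real (ss n)) =
            (complex_of_real (2 powr (- real n)) * 2^(n-1)) * (complex_of_real (ss n) * uu n j)" by (simp add: ac_simps)
      thus ?thesis unfolding e r using j' by (auto simp: D_mulvec[OF psi0_carrier j'] TT_psi0[OF assms] psi0_nth)
    qed
  next
    show "dim_vec (D_mat n *\<^sub>v psi0 n) = dim_vec ((1/2) \<cdot>\<^sub>v psi0 n)" by (simp add: D_mat_def psi0_def)
  qed
qed

lemma eig1: assumes "n \<ge> 1" shows "eigenvector (D_mat n) (psi1 n) (1/2)"
  unfolding eigenvector_def
proof (intro conjI)
  show "psi1 n \<in> carrier_vec (dim_row (D_mat n))" by (simp add: D_mat_def psi1_carrier)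
  show "psi1 n \<noteq> 0\<^sub>v (dim_row (D_mat n))" using psi1_ne[OF assms] by (simp add: D_mat_def)
  show "D_mat n *\<^sub>v psi1 n = (1/2) \<cdot>\<^sub>v psi1 n"
  proof (rule eq_vecI)
    fix j assume j: "j < dim_vec ((1/2) \<cdot>\<^sub>v psi1 n)"
    hence j': "j < 2^n" by (simp add: psi1_def)
    show "(D_mat n *\<^sub>v psi1 n) $ j = ((1/2) \<cdot>\<^sub>v psi1 n) $ j"
    proof -
      have e: "((1/2) \<cdot>\<^sub>v psi1 n) $ j = 1/2 * psi1 n $ j" using j' psi1_carrier[of n] by simp
      have r: "complex_of_real (2 powr (- real n)) * 2^(n-1) = 1/2" by (rule r_half[OF assms])
      have "complex_of_real (2 powr (- real n)) * uu n j * (2^(n-1) * complex_of_real (ss n)) =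
            (complex_of_real (2 powr (- real n)) * 2^(n-1)) * (complex_of_real (ss n) * uu n j)" by (simp add: ac_simps)
      thus ?thesis unfolding e r using j' by (auto simp: D_mulvec[OF psi1_carrier j'] TT_psi1[OF assms] psi1_nth)
    qed
  next
    show "dim_vec (D_mat n *\<^sub>v psi1 n) = dim_vec ((1/2) \<cdot>\<^sub>v psi1 n)" by (simp add: D_mat_def psi1_def)
  qed
qed

lemma norm0: assumes "n \<ge> 1" shows "vnorm2 (psi0 n) = 1"
proof -
  have "vnorm2 (psi0 n) = (\<Sum>l<(2::nat)^n. if even l = True then ss n * ss n else 0)"
    unfolding vnorm2_def by (simp add: psi0_def, rule sum.cong, auto simp: norm_mult uu_norm[unfolded uu_def] ss_def power2_eq_square)
  thus ?thesis using sum_par[OF assms, of True "ss n * ss n"] ss_sq[OF assms] by (simp add: mult.commute)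
qed

lemma norm1: assumes "n \<ge> 1" shows "vnorm2 (psi1 n) = 1"
proof -
  have "vnorm2 (psi1 n) = (\<Sum>l<(2::nat)^n. if even l = False then ss n * ss n else 0)"
    unfolding vnorm2_def by (simp add: psi1_def, rule sum.cong, auto simp: norm_mult uu_norm[unfolded uu_def] ss_def power2_eq_square)
  thus ?thesis using sum_par[OF assms, of False "ss n * ss n"] ss_sq[OF assms] by (simp add: mult.commute)
qed

lemma inner01: "vinner (psi0 n) (psi1 n) = 0"
  unfolding vinner_def by (rule sum.neutral, simp add: psi0_def psi1_def)



lemma TT_smult: "v \<in> carrier_vec (2^n) \<Longrightarrow> TT n p (e \<cdot>\<^sub>v v) = e * TT n p v"
  unfolding TT_def by (subst sum_distrib_left, rule sum.cong, auto)

lemma eigval: assumes n: "n \<ge> 1" and ev: "eigenvector (D_mat n) w e" shows "e = 0 \<or> e = 1/2"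
proof (rule ccontr)
  assume ne: "\<not> (e = 0 \<or> e = 1/2)"
  have w: "w \<in> carrier_vec (2^n)" and w0: "w \<noteq> 0\<^sub>v (2^n)" and eq: "D_mat n *\<^sub>v w = e \<cdot>\<^sub>v w"
    using ev unfolding eigenvector_def by (auto simp: D_mat_def)
  have T0: "TT n p w = 0" for p
  proof -
    have "e * TT n p w = TT n p w / 2" using TT_D[OF n w, of p] eq TT_smult[OF w] by simp
    hence "(e - 1/2) * TT n p w = 0" by (simp add: algebra_simps)
    thus ?thesis using ne by simp
  qed
  have "\<exists>j<2^n. w $ j \<noteq> 0"
  proof (rule ccontr)
    assume "\<not> (\<exists>j<2^n. w $ j \<noteq> 0)"
    hence "w = 0\<^sub>v (2^n)" using w by (intro eq_vecI) auto
    with w0 show False by simp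
  qed
  then obtain j where j: "j < 2^n" "w $ j \<noteq> 0" by blast
  have "(D_mat n *\<^sub>v w) $ j = 0" using D_mulvec[OF w j(1)] T0 by simp
  hence "e * w $ j = 0" using eq j w by simp
  thus False using ne j by simp
qed

definition tr :: "complex mat \<Rightarrow> complex" where "tr A = (\<Sum>i<dim_row A. A $$ (i,i))"

lemma tr_comm: assumes A: "A \<in> carrier_mat n m" and B: "B \<in> carrier_mat m n" shows "tr (A * B) = tr (B * A)"
proof -
  have e1: "(A * B) $$ (i,i) = (\<Sum>k<m. A $$ (i,k) * B $$ (k,i))" if i: "i < n" for i
  proof -
    have "(A * B) $$ (i,i) = row A i \<bullet> col B i" using A B i by simp
    also have "\<dots> = (\<Sum>k\<in>{0..<m}. row A i $ k * col B i $ k)" using B by (simp add: scalar_prod_def)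
    also have "\<dots> = (\<Sum>k<m. A $$ (i,k) * B $$ (k,i))"
      unfolding atLeast0LessThan by (rule sum.cong) (use A B i in auto)
    finally show ?thesis .
  qed
  have e2: "(B * A) $$ (k,k) = (\<Sum>i<n. B $$ (k,i) * A $$ (i,k))" if k: "k < m" for k
  proof -
    have "(B * A) $$ (k,k) = row B k \<bullet> col A k" using A B k by simp
    also have "\<dots> = (\<Sum>i\<in>{0..<n}. row B k $ i * col A k $ i)" using A by (simp add: scalar_prod_def)
    also have "\<dots> = (\<Sum>i<n. B $$ (k,i) * A $$ (i,k))"
      unfolding atLeast0LessThan by (rule sum.cong) (use A B k in auto)
    finally show ?thesis .
  qed
  have "tr (A * B) = (\<Sum>i<n. \<Sum>k<m. A $$ (i,k) * B $$ (k,i))"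
    unfolding tr_def using A by (intro sum.cong) (auto simp: e1)
  also have "\<dots> = (\<Sum>k<m. \<Sum>i<n. B $$ (k,i) * A $$ (i,k))" by (subst sum.swap) (simp add: mult.commute)
  also have "\<dots> = tr (B * A)"
    unfolding tr_def using B by (intro sum.cong) (auto simp: e2)
  finally show ?thesis .
qed

lemma tr_similar: assumes "similar_mat_wit A B P Q" shows "tr A = tr B"
proof -
  define n where "n = dim_row A"
  have d: "{A,B,P,Q} \<subseteq> carrier_mat n n \<and> P * Q = 1\<^sub>m n \<and> Q * P = 1\<^sub>m n \<and> A = P * B * Q"
    using assms unfolding similar_mat_wit_def Let_def n_def by blast
  hence cB: "B \<in> carrier_mat n n" and cP: "P \<in> carrier_mat n n" and cQ: "Q \<in> carrier_mat n n"
    and QP: "Q * P = 1\<^sub>m n" and A: "A = P * B * Q" by auto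
  have cPB: "P * B \<in> carrier_mat n n" using cP cB by (rule mult_carrier_mat)
  have "tr A = tr ((P * B) * Q)" using A by simp
  also have "\<dots> = tr (Q * (P * B))" by (rule tr_comm[OF cPB cQ])
  also have "Q * (P * B) = (Q * P) * B" by (rule assoc_mult_mat[OF cQ cP cB, symmetric])
  also have "(Q * P) * B = B" unfolding QP by (rule left_mult_one_mat[OF cB])
  finally show ?thesis .
qed

lemma tr_D: assumes "n \<ge> 1" shows "tr (D_mat n) = 1"
proof -
  have "tr (D_mat n) = (\<Sum>i<(2::nat)^n. complex_of_real (2 powr (- real n)))"
    unfolding tr_def by (rule sum.cong, auto simp: D_mat_def D_entry_eq uu_cnj)
  also have "\<dots> = complex_of_real (2 powr (- real n)) * 2 * 2^(n-1)"
  proof -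
    have "(2::nat)^n = 2*2^(n-1)" using assms by (cases n) auto
    thus ?thesis by simp
  qed
  also have "\<dots> = 1" using r_half[OF assms] by (simp add: mult.commute mult.left_commute)
  finally show ?thesis .
qed

lemma list_count: "set as \<subseteq> {0, 1/2::complex} \<Longrightarrow>
   (\<Prod>a\<leftarrow>as. [:- a, 1:]) = [:-(1/2), 1:] ^ count_list as (1/2) * [:0,1:] ^ (length as - count_list as (1/2))
   \<and> sum_list as = of_nat (count_list as (1/2)) / 2 \<and> count_list as (1/2) \<le> length as"
proof (induction as)
  case Nil thus ?case by simp
next
  case (Cons a as)
  hence IH: "(\<Prod>a\<leftarrow>as. [:- a, 1:]) = [:-(1/2), 1:] ^ count_list as (1/2) * [:0,1:] ^ (length as - count_list as (1/2))"
    "sum_list as = of_nat (count_list as (1/2)) / 2" "count_list as (1/2) \<le> length as" by auto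
  from Cons.prems have "a = 0 \<or> a = 1/2" by auto
  thus ?case
  proof
    assume a: "a = 0"
    thus ?thesis using IH by (simp add: Suc_diff_le algebra_simps)
  next
    assume a: "a = 1/2"
    from IH show ?thesis unfolding a by (simp add: algebra_simps add_divide_distrib)
  qed
qed



theorem theorem5p6:
  fixes n :: nat
  assumes "n \<ge> 1"
  shows "char_poly (D_mat n) = [:- (1/2), 1:] ^ 2 * [:0, 1:] ^ (2 ^ n - 2)
     \<and> eigenvector (D_mat n) (psi0 n) (1/2)
     \<and> eigenvector (D_mat n) (psi1 n) (1/2)
     \<and> vnorm2 (psi0 n) = 1 \<and> vnorm2 (psi1 n) = 1
     \<and> vinner (psi0 n) (psi1 n) = 0
     \<and> (\<forall>v \<in> carrier_vec (2 ^ n). D_mat n *\<^sub>v v = (1/2) \<cdot>\<^sub>v v \<longrightarrow>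
          (\<exists>a b. v = a \<cdot>\<^sub>v psi0 n + b \<cdot>\<^sub>v psi1 n))"
proof (intro conjI)
  show "eigenvector (D_mat n) (psi0 n) (1/2)" by (rule eig0[OF assms])
  show "eigenvector (D_mat n) (psi1 n) (1/2)" by (rule eig1[OF assms])
  show "vnorm2 (psi0 n) = 1" by (rule norm0[OF assms])
  show "vnorm2 (psi1 n) = 1" by (rule norm1[OF assms])
  show "vinner (psi0 n) (psi1 n) = 0" by (rule inner01)
  show "char_poly (D_mat n) = [:- (1/2), 1:] ^ 2 * [:0, 1:] ^ (2 ^ n - 2)"
  proof -
    obtain as where cp: "char_poly (D_mat n) = (\<Prod>a\<leftarrow>as. [:- a, 1:])" and len: "length as = 2^n"
      using char_poly_factorized[OF D_carrier] by blast
    obtain B P Q where sd: "schur_decomposition (D_mat n) as = (B,P,Q)" by (metis prod_cases3)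
    from schur_decomposition[OF D_carrier cp sd]
    have sim: "similar_mat_wit (D_mat n) B P Q" and dg: "diag_mat B = as" by auto
    have "tr (D_mat n) = tr B" by (rule tr_similar[OF sim])
    also have "tr B = sum_list as" unfolding dg[symmetric] tr_def diag_mat_def
      by (simp add: sum_list_distinct_conv_sum_set atLeast0LessThan)
    finally have sum1: "sum_list as = 1" using tr_D[OF assms] by simp
    have sub: "set as \<subseteq> {0, 1/2}"
    proof
      fix e assume e: "e \<in> set as"
      have "poly (char_poly (D_mat n)) e = 0" unfolding cp using e
        by (simp add: poly_prod_list prod_list_zero_iff)
      hence "eigenvalue (D_mat n) e" using eigenvalue_root_char_poly[OF D_carrier] by blast
      then obtain w where "eigenvector (D_mat n) w e" unfolding eigenvalue_def by blast
      from eigval[OF assms this] show "e \<in> {0, 1/2}" by simp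
    qed
    from list_count[OF sub] sum1 have
      p: "(\<Prod>a\<leftarrow>as. [:- a, 1:]) = [:-(1/2), 1:] ^ count_list as (1/2) * [:0,1:] ^ (length as - count_list as (1/2))"
      and c0: "complex_of_nat (count_list as (1/2)) = of_nat 2" by auto
    from c0 have c: "count_list as (1/2) = 2" by (simp only: of_nat_eq_iff)
    show ?thesis unfolding cp p c len ..
  qed
  show "\<forall>v \<in> carrier_vec (2 ^ n). D_mat n *\<^sub>v v = (1/2) \<cdot>\<^sub>v v \<longrightarrow>
          (\<exists>a b. v = a \<cdot>\<^sub>v psi0 n + b \<cdot>\<^sub>v psi1 n)"
  proof (intro ballI impI)
    fix v :: "complex vec" assume v: "v \<in> carrier_vec (2^n)" and eq: "D_mat n *\<^sub>v v = (1/2) \<cdot>\<^sub>v v"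
    let ?r = "complex_of_real (2 powr (- real n))" and ?s = "complex_of_real (ss n)"
    have s0: "?s \<noteq> 0" using ss_pos[of n] by simp
    define a where "a = 2 * ?r * TT n True v / ?s"
    define b where "b = 2 * ?r * TT n False v / ?s"
    have "v = a \<cdot>\<^sub>v psi0 n + b \<cdot>\<^sub>v psi1 n"
    proof (rule eq_vecI)
      fix j assume "j < dim_vec (a \<cdot>\<^sub>v psi0 n + b \<cdot>\<^sub>v psi1 n)"
      hence j: "j < 2^n" by (simp add: psi1_def)
      have "v $ j = 2 * (D_mat n *\<^sub>v v) $ j" using eq v j by simp
      also have "\<dots> = 2 * ?r * uu n j * TT n (even j) v" using D_mulvec[OF v j] by simp
      also have "\<dots> = (a \<cdot>\<^sub>v psi0 n + b \<cdot>\<^sub>v psi1 n) $ j"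
      proof -
        have e: "(a \<cdot>\<^sub>v psi0 n + b \<cdot>\<^sub>v psi1 n) $ j = a * psi0 n $ j + b * psi1 n $ j"
          using j psi0_carrier[of n] psi1_carrier[of n] by simp
        show ?thesis unfolding e unfolding psi0_nth[OF j] psi1_nth[OF j] a_def b_def
          using s0 by (cases "even j") (simp_all add: field_simps)
      qed
      finally show "v $ j = (a \<cdot>\<^sub>v psi0 n + b \<cdot>\<^sub>v psi1 n) $ j" .
    next
      show "dim_vec v = dim_vec (a \<cdot>\<^sub>v psi0 n + b \<cdot>\<^sub>v psi1 n)" using v by (simp add: psi1_def)
    qed
    thus "\<exists>a b. v = a \<cdot>\<^sub>v psi0 n + b \<cdot>\<^sub>v psi1 n" by blast
  qed
qed


end
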